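(* Let $r\ge 2$ and let $p=p(n)$ satisfy $p=\omega(n^{-1})$ and $p=o(n^{-1/r})$, and let $t_0:=(r!/(np^r))^{1/(r-1)}$. In the exploration process for bootstrap percolation on $G(n,p)$ described in the context, let $S\subset[n]$ with $|S|=o(n)$. Conditional on the event $T\ge t_0$ and on the sets $\mathcal{A}(t_0)$ and $\mathcal{Z}(t_0)$, with probability $1-\exp(-\Omega(p^{-1}))$ the number of vertices in $[n]\setminus(\mathcal{Z}(t_0)\cup S)$ having at least $r-1$ neighbours in $\mathcal{Z}(t_0)$ is at least $3rp^{-1}/4$.
   Context: $G(n,p)$ is the random graph on $[n]$ with each edge independently present with probability $p$. The initially infected set is $\mathcal{A}(0)=\{1,\dots,a\}$ (infection threshold $r$). Exploration process: set $\mathcal{Z}(0)=\emptyset$. For each step $t=1,\dots,n$: if $\mathcal{A}(t-1)\setminus\mathcal{Z}(t-1)\neq\emptyset$, pick a vertex $u_t$ in it by an arbitrary rule and set $\mathcal{Z}(t)=\mathcal{Z}(t-1)\cup\{u_t\}$; otherwise $\mathcal{Z}(t)=\mathcal{Z}(t-1)$. For $t\ge0$ and $i\in[n-a]$ let $X(t,i)$ be the indicator that vertex $a+i$ has at least $r$ neighbours in $\mathcal{Z}(t)$, and set $\mathcal{A}(t)=\mathcal{A}(0)\cup\{a+i: X(t,i)=1,\ i\in[n-a]\}$. $T$ is the smallest $t$ with $\mathcal{A}(t)=\mathcal{Z}(t)$. Asymptotic notation refers to $n\to\infty$. *)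

theory Defs
  imports "HOL-Probability.Probability" "HOL-Library.Landau_Symbols"
begin

(* Vertex set [n] = {1..n}; a graph is given by its edge indicator on 2-element sets. *)
definition all_edges :: "nat \<Rightarrow> nat set set" where
  "all_edges n = {e. \<exists>i j. e = {i, j} \<and> i \<noteq> j \<and> i \<in> {1..n} \<and> j \<in> {1..n}}"

definition gnp :: "nat \<Rightarrow> real \<Rightarrow> (nat set \<Rightarrow> bool) pmf" where
  "gnp n p = Pi_pmf (all_edges n) False (\<lambda>_. bernoulli_pmf p)"

definition adj :: "(nat set \<Rightarrow> bool) \<Rightarrow> nat \<Rightarrow> nat \<Rightarrow> bool" where
  "adj G u v \<longleftrightarrow> u \<noteq> v \<and> G {u, v}"

definition infected :: "nat \<Rightarrow> nat \<Rightarrow> nat \<Rightarrow> (nat set \<Rightarrow> bool) \<Rightarrow> nat set \<Rightarrow> nat set" where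
  "infected n a r G Z = {1..a} \<union> {v \<in> {a+1..n}. r \<le> card {z \<in> Z. adj G v z}}"

(* The exploration process: list of chosen vertices u_1,u_2,... up to step t.
   The rule picks u_t from the history and the current infected set. *)
primrec explore :: "nat \<Rightarrow> nat \<Rightarrow> nat \<Rightarrow> (nat list \<Rightarrow> nat set \<Rightarrow> nat) \<Rightarrow>
                    (nat set \<Rightarrow> bool) \<Rightarrow> nat \<Rightarrow> nat list" where
  "explore n a r rule G 0 = []"
| "explore n a r rule G (Suc t) =
     (let us = explore n a r rule G t; A = infected n a r G (set us) in
      if A - set us \<noteq> {} then us @ [rule us A] else us)"

definition Zp :: "nat \<Rightarrow> nat \<Rightarrow> nat \<Rightarrow> (nat list \<Rightarrow> nat set \<Rightarrow> nat) \<Rightarrow>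
                    (nat set \<Rightarrow> bool) \<Rightarrow> nat \<Rightarrow> nat set" where
  "Zp n a r rule G t = set (explore n a r rule G t)"

definition Ap :: "nat \<Rightarrow> nat \<Rightarrow> nat \<Rightarrow> (nat list \<Rightarrow> nat set \<Rightarrow> nat) \<Rightarrow>
                    (nat set \<Rightarrow> bool) \<Rightarrow> nat \<Rightarrow> nat set" where
  "Ap n a r rule G t = infected n a r G (Zp n a r rule G t)"

definition stop_time :: "nat \<Rightarrow> nat \<Rightarrow> nat \<Rightarrow> (nat list \<Rightarrow> nat set \<Rightarrow> nat) \<Rightarrow>
                    (nat set \<Rightarrow> bool) \<Rightarrow> nat" where
  "stop_time n a r rule G = (LEAST t. Ap n a r rule G t = Zp n a r rule G t)"

definition t0 :: "nat \<Rightarrow> nat \<Rightarrow> real \<Rightarrow> nat" where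
  "t0 r n p = nat \<lfloor>(fact r / (real n * p ^ r)) powr (1 / (real r - 1))\<rfloor>"

end

theory Submission
  imports Defs
begin
definition deg :: "(nat set \<Rightarrow> bool) \<Rightarrow> nat set \<Rightarrow> nat \<Rightarrow> nat" where
  "deg G Z v = card {z\<in>Z. adj G v z}"

lemma explore_Suc_cases:
  "explore n a r rule G (Suc t) = explore n a r rule G t \<or>
   explore n a r rule G (Suc t) = explore n a r rule G t @ [rule (explore n a r rule G t) (infected n a r G (set (explore n a r rule G t)))]"
  by (simp add: Let_def)

lemma explore_mono: "s \<le> t \<Longrightarrow> set (explore n a r rule G s) \<subseteq> set (explore n a r rule G t)"
proof (induction t)
  case 0 then show ?case by simp
next
  case (Suc t)
  show ?case
  proof (cases "s = Suc t")
    case False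
    then have "set (explore n a r rule G s) \<subseteq> set (explore n a r rule G t)" using Suc by auto
    also have "\<dots> \<subseteq> set (explore n a r rule G (Suc t))" using explore_Suc_cases[of n a r rule G t] by auto
    finally show ?thesis .
  qed simp
qed

lemma explore_len: "length (explore n a r rule G t) \<le> t"
  by (induction t) (auto simp: Let_def)

lemma infected_mono: "finite Z' \<Longrightarrow> Z \<subseteq> Z' \<Longrightarrow> infected n a r G Z \<subseteq> infected n a r G Z'"
proof
  fix v assume fin: "finite Z'" and sub: "Z \<subseteq> Z'" and v: "v \<in> infected n a r G Z"
  have "card {z \<in> Z. adj G v z} \<le> card {z \<in> Z'. adj G v z}"
    using fin sub by (intro card_mono) auto
  then show "v \<in> infected n a r G Z'" using v unfolding infected_def by auto
qed

lemma infected_sub: "a \<le> n \<Longrightarrow> infected n a r G Z \<subseteq> {1..n}"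
  unfolding infected_def by auto

locale proc =
  fixes n a r :: nat and rule :: "nat list \<Rightarrow> nat set \<Rightarrow> nat"
  assumes rule: "\<And>us A. A - set us \<noteq> {} \<Longrightarrow> rule us A \<in> A - set us"
    and an: "a \<le> n"
begin

lemma explore_distinct: "distinct (explore n a r rule G t)"
proof (induction t)
  case (Suc t)
  then show ?case using rule by (auto simp: Let_def)
qed simp

lemma explore_sub: "set (explore n a r rule G t) \<subseteq> {1..n}"
proof (induction t)
  case (Suc t)
  let ?us = "explore n a r rule G t"
  show ?case
  proof (cases "infected n a r G (set ?us) - set ?us \<noteq> {}")
    case True
    then have "rule ?us (infected n a r G (set ?us)) \<in> {1..n}"
      using rule[OF True] infected_sub[OF an, of r G "set ?us"] by blast
    then show ?thesis using Suc True by (simp add: Let_def)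
  next
    case False then show ?thesis using Suc by (simp add: Let_def)
  qed
qed simp

lemma Z_sub_A: "set (explore n a r rule G t) \<subseteq> infected n a r G (set (explore n a r rule G t))"
proof (induction t)
  case (Suc t)
  let ?us = "explore n a r rule G t"
  have m: "infected n a r G (set ?us) \<subseteq> infected n a r G (set (explore n a r rule G (Suc t)))"
    by (intro infected_mono explore_mono) auto
  show ?case
  proof (cases "infected n a r G (set ?us) - set ?us \<noteq> {}")
    case True
    then have "rule ?us (infected n a r G (set ?us)) \<in> infected n a r G (set ?us)" using rule by blast
    then show ?thesis using Suc m True by (auto simp: Let_def)
  next
    case False
    then show ?thesis using Suc by (auto simp: Let_def)
  qed
qed simp

lemma len_before_stop:
  "(\<forall>s<m. Ap n a r rule G s \<noteq> Zp n a r rule G s) \<Longrightarrow> length (explore n a r rule G m) = m"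
proof (induction m)
  case (Suc m)
  let ?us = "explore n a r rule G m"
  have "length ?us = m" using Suc by auto
  moreover have "infected n a r G (set ?us) \<noteq> set ?us" using Suc.prems by (auto simp: Ap_def Zp_def)
  then have "infected n a r G (set ?us) - set ?us \<noteq> {}" using Z_sub_A[of G m] by auto
  ultimately show ?case by (simp add: Let_def)
qed simp

lemma stop_exists: "\<exists>s. Ap n a r rule G s = Zp n a r rule G s"
proof (rule ccontr)
  assume "\<not> ?thesis"
  then have "length (explore n a r rule G (Suc n)) = Suc n" by (intro len_before_stop) auto
  then have "card (set (explore n a r rule G (Suc n))) = Suc n"
    using distinct_card[OF explore_distinct] by (simp del: explore.simps)
  moreover have "card (set (explore n a r rule G (Suc n))) \<le> card {1..n}"
    by (rule card_mono[OF finite_atLeastAtMost explore_sub])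
  ultimately show False by (simp del: explore.simps)
qed

lemma stop_iff: "tt \<le> stop_time n a r rule G \<longleftrightarrow> (\<forall>s<tt. Ap n a r rule G s \<noteq> Zp n a r rule G s)"
proof
  assume "tt \<le> stop_time n a r rule G"
  show "\<forall>s<tt. Ap n a r rule G s \<noteq> Zp n a r rule G s"
  proof (intro allI impI)
    fix s assume "s < tt"
    with \<open>tt \<le> stop_time n a r rule G\<close> have "s < (LEAST t. Ap n a r rule G t = Zp n a r rule G t)"
      unfolding stop_time_def by simp
    then show "Ap n a r rule G s \<noteq> Zp n a r rule G s" by (rule not_less_Least)
  qed
next
  assume A: "\<forall>s<tt. Ap n a r rule G s \<noteq> Zp n a r rule G s"
  show "tt \<le> stop_time n a r rule G"
  proof (rule ccontr)
    assume "\<not> tt \<le> stop_time n a r rule G"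
    moreover have "Ap n a r rule G (stop_time n a r rule G) = Zp n a r rule G (stop_time n a r rule G)"
      unfolding stop_time_def by (rule LeastI_ex[OF stop_exists])
    ultimately show False using A by auto
  qed
qed

lemma card_Z_at:
  assumes "tt \<le> stop_time n a r rule G"
  shows "card (Zp n a r rule G tt) = tt"
proof -
  have "length (explore n a r rule G tt) = tt"
    using assms stop_iff len_before_stop by blast
  then show ?thesis unfolding Zp_def using distinct_card[OF explore_distinct] by simp
qed

end

context proc begin

lemma infected_agree:
  assumes fin: "finite Z0" and Y: "Y \<subseteq> Z0"
    and agree: "\<And>v. v \<in> {a+1..n} \<Longrightarrow> (\<forall>z\<in>Z0. adj G v z = adj G2 v z) \<or> (deg G Z0 v < r \<and> deg G2 Z0 v < r)"
  shows "infected n a r G Y = infected n a r G2 Y"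
proof -
  have "(r \<le> card {z\<in>Y. adj G v z}) = (r \<le> card {z\<in>Y. adj G2 v z})" if v: "v \<in> {a+1..n}" for v
  proof (cases "\<forall>z\<in>Z0. adj G v z = adj G2 v z")
    case True
    then have "{z\<in>Y. adj G v z} = {z\<in>Y. adj G2 v z}" using Y by auto
    then show ?thesis by simp
  next
    case False
    then have d: "deg G Z0 v < r" "deg G2 Z0 v < r" using agree[OF v] by auto
    have "card {z\<in>Y. adj G v z} \<le> deg G Z0 v" unfolding deg_def
      using fin Y by (intro card_mono) auto
    moreover have "card {z\<in>Y. adj G2 v z} \<le> deg G2 Z0 v" unfolding deg_def
      using fin Y by (intro card_mono) auto
    ultimately show ?thesis using d by linarith
  qed
  then show ?thesis unfolding infected_def by blast
qed

lemma explore_agree: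
  assumes Z0: "set (explore n a r rule G tt) \<subseteq> Z0"
    and inf: "\<And>Y. Y \<subseteq> Z0 \<Longrightarrow> infected n a r G Y = infected n a r G2 Y"
  shows "s \<le> tt \<Longrightarrow> explore n a r rule G2 s = explore n a r rule G s"
proof (induction s)
  case (Suc s)
  then have eq: "explore n a r rule G2 s = explore n a r rule G s" by simp
  have "set (explore n a r rule G s) \<subseteq> Z0"
    using explore_mono[of s tt n a r rule G] Suc.prems Z0 by auto
  then have "infected n a r G (set (explore n a r rule G s)) = infected n a r G2 (set (explore n a r rule G s))"
    using inf by blast
  then show ?case using eq by (simp add: Let_def)
qed simp

definition Cset :: "nat \<Rightarrow> nat set \<Rightarrow> nat set \<Rightarrow> (nat set \<Rightarrow> bool) set" where
  "Cset tt A0 Z0 = {G. tt \<le> stop_time n a r rule G \<and> Ap n a r rule G tt = A0 \<and> Zp n a r rule G tt = Z0}"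

lemma C_transfer:
  assumes G: "G \<in> Cset tt A0 Z0"
    and agree: "\<And>v. v \<in> {a+1..n} \<Longrightarrow> (\<forall>z\<in>Z0. adj G v z = adj G2 v z) \<or> (deg G Z0 v < r \<and> deg G2 Z0 v < r)"
  shows "G2 \<in> Cset tt A0 Z0"
proof -
  have Z0: "set (explore n a r rule G tt) = Z0" and A0: "Ap n a r rule G tt = A0"
    and st: "tt \<le> stop_time n a r rule G"
    using G unfolding Cset_def Zp_def by auto
  have fin: "finite Z0" using Z0 by auto
  have inf: "infected n a r G Y = infected n a r G2 Y" if "Y \<subseteq> Z0" for Y
    using infected_agree[OF fin that agree] by blast
  have ex: "explore n a r rule G2 s = explore n a r rule G s" if "s \<le> tt" for s
    using explore_agree[where tt=tt, OF _ inf that] Z0 by auto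
  have sub: "set (explore n a r rule G s) \<subseteq> Z0" if "s \<le> tt" for s
    using explore_mono[OF that, of n a r rule G] Z0 by auto
  have Zeq: "Zp n a r rule G2 s = Zp n a r rule G s" if "s \<le> tt" for s
    using ex[OF that] by (simp add: Zp_def)
  have Aeq: "Ap n a r rule G2 s = Ap n a r rule G s" if "s \<le> tt" for s
    using Zeq[OF that] inf[OF sub[OF that]] by (simp add: Ap_def Zp_def)
  have "tt \<le> stop_time n a r rule G2"
    using st unfolding stop_iff using Zeq Aeq by auto
  moreover have "Zp n a r rule G2 tt = Z0" using Zeq Z0 by (simp add: Zp_def)
  moreover have "Ap n a r rule G2 tt = A0" using Aeq A0 by simp
  ultimately show ?thesis unfolding Cset_def by simp
qed

end

definition dep :: "'a set \<Rightarrow> (('a \<Rightarrow> 'b) \<Rightarrow> real) \<Rightarrow> bool" where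
  "dep X f \<longleftrightarrow> (\<forall>G G2. (\<forall>e\<in>X. G e = G2 e) \<longrightarrow> f G = f G2)"

lemma dep_mono: "dep X f \<Longrightarrow> X \<subseteq> Y \<Longrightarrow> dep Y f"
  unfolding dep_def by blast

lemma dep_mult: "dep X f \<Longrightarrow> dep X g \<Longrightarrow> dep X (\<lambda>G. f G * g G)"
  unfolding dep_def
proof (intro allI impI)
  fix G G2 :: "'a \<Rightarrow> 'b"
  assume "\<forall>G G2. (\<forall>e\<in>X. G e = G2 e) \<longrightarrow> f G = f G2" "\<forall>G G2. (\<forall>e\<in>X. G e = G2 e) \<longrightarrow> g G = g G2"
    "\<forall>e\<in>X. G e = G2 e"
  then have "f G = f G2" "g G = g G2" by blast+
  then show "f G * g G = f G2 * g G2" by simp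
qed

lemma dep_prod:
  fixes g :: "'v \<Rightarrow> ('a \<Rightarrow> 'b) \<Rightarrow> real"
  shows "(\<And>v. v \<in> W \<Longrightarrow> dep X (g v)) \<Longrightarrow> dep X (\<lambda>G. \<Prod>v\<in>W. g v G)"
  unfolding dep_def
proof (intro allI impI)
  fix G G2 :: "'a \<Rightarrow> 'b"
  assume "\<And>v. v \<in> W \<Longrightarrow> \<forall>G G2. (\<forall>e\<in>X. G e = G2 e) \<longrightarrow> g v G = g v G2" "\<forall>e\<in>X. G e = G2 e"
  then show "(\<Prod>v\<in>W. g v G) = (\<Prod>v\<in>W. g v G2)" by (intro prod.cong) auto
qed

lemma finite_set_Pi_pmf_bool:
  fixes Q :: "'a \<Rightarrow> bool pmf"
  assumes "finite E"
  shows "finite (set_pmf (Pi_pmf E d Q))"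
  unfolding set_Pi_pmf[OF assms] by (intro finite_PiE_dflt assms) auto

lemma expectation_pair_mult:
  fixes f :: "'a \<Rightarrow> real" and g :: "'b \<Rightarrow> real"
  assumes "finite (set_pmf P)" "finite (set_pmf Q)"
  shows "measure_pmf.expectation (pair_pmf P Q) (\<lambda>x. f (fst x) * g (snd x)) =
         measure_pmf.expectation P f * measure_pmf.expectation Q g"
proof -
  have "measure_pmf.expectation (pair_pmf P Q) (\<lambda>x. f (fst x) * g (snd x)) =
     (\<Sum>x\<in>set_pmf P \<times> set_pmf Q. f (fst x) * g (snd x) * pmf (pair_pmf P Q) x)"
    using assms by (intro integral_measure_pmf_real) (auto simp: set_pmf_eq pmf_pair)
  also have "\<dots> = (\<Sum>a\<in>set_pmf P. \<Sum>b\<in>set_pmf Q. (f a * pmf P a) * (g b * pmf Q b))"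
    by (subst sum.cartesian_product) (auto simp: pmf_pair intro!: sum.cong)
  also have "\<dots> = (\<Sum>a\<in>set_pmf P. f a * pmf P a) * (\<Sum>b\<in>set_pmf Q. g b * pmf Q b)"
    by (simp add: sum_product)
  also have "\<dots> = measure_pmf.expectation P f * measure_pmf.expectation Q g"
    using assms by (subst (1 2) integral_measure_pmf_real[where A="set_pmf _"]) (auto simp: set_pmf_eq)
  finally show ?thesis .
qed

lemma indep_split:
  fixes Q :: "'a \<Rightarrow> bool pmf" and f g :: "('a \<Rightarrow> bool) \<Rightarrow> real"
  assumes finE: "finite E" and AE: "A \<subseteq> E" and df: "dep A f" and dg: "dep (- A) g"
  shows "measure_pmf.expectation (Pi_pmf E d Q) (\<lambda>G. f G * g G) =
         measure_pmf.expectation (Pi_pmf E d Q) f * measure_pmf.expectation (Pi_pmf E d Q) g"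
proof -
  have finA: "finite A" using finE AE finite_subset by blast
  have finB: "finite (E - A)" using finE by simp
  define m where "m = (\<lambda>(x::'a\<Rightarrow>bool, y::'a\<Rightarrow>bool) e. if e \<in> A then x e else y e)"
  have E: "E = A \<union> (E - A)" using AE by blast
  have PE: "Pi_pmf E d Q = map_pmf m (pair_pmf (Pi_pmf A d Q) (Pi_pmf (E - A) d Q))"
    unfolding m_def by (subst E, rule Pi_pmf_union) (use finA finB in auto)
  have fm: "f (m xy) = f (fst xy)" for xy
    using df unfolding dep_def m_def by (cases xy) auto
  have gm: "g (m xy) = g (snd xy)" for xy
    using dg unfolding dep_def m_def by (cases xy) auto
  have fin1: "finite (set_pmf (Pi_pmf A d Q))" "finite (set_pmf (Pi_pmf (E - A) d Q))"
    using finite_set_Pi_pmf_bool finA finB by blast+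
  show ?thesis
    unfolding PE integral_map_pmf fm gm
    by (simp add: expectation_pair_mult[OF fin1])
qed

lemma indep_blocks:
  fixes Q :: "'a \<Rightarrow> bool pmf" and \<phi> :: "('a \<Rightarrow> bool) \<Rightarrow> real"
    and g :: "'v \<Rightarrow> ('a \<Rightarrow> bool) \<Rightarrow> real"
  assumes finE: "finite E" and finW: "finite W"
    and Fsub: "\<And>v. v \<in> W \<Longrightarrow> F v \<subseteq> E"
    and disj: "\<And>v w. v \<in> W \<Longrightarrow> w \<in> W \<Longrightarrow> v \<noteq> w \<Longrightarrow> F v \<inter> F w = {}"
    and dphi: "dep (- (\<Union>v\<in>W. F v)) \<phi>"
    and dg: "\<And>v. v \<in> W \<Longrightarrow> dep (F v) (g v)"
  shows "measure_pmf.expectation (Pi_pmf E d Q) (\<lambda>G. \<phi> G * (\<Prod>v\<in>W. g v G)) =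
         measure_pmf.expectation (Pi_pmf E d Q) \<phi> * (\<Prod>v\<in>W. measure_pmf.expectation (Pi_pmf E d Q) (g v))"
  using finW Fsub disj dphi dg
proof (induction W rule: finite_induct)
  case empty
  then show ?case by simp
next
  case (insert v W)
  let ?M = "Pi_pmf E d Q"
  have d1: "dep (F v) (g v)" using insert.prems(4)[of v] by simp
  have sub1: "- (\<Union>w\<in>insert v W. F w) \<subseteq> - (\<Union>w\<in>W. F w)" by blast
  have dphi: "dep (- (\<Union>w\<in>W. F w)) \<phi>"
    using dep_mono[OF insert.prems(3) sub1] .
  have sub2: "- (\<Union>w\<in>insert v W. F w) \<subseteq> - F v" by blast
  have d2a: "dep (- F v) \<phi>" using dep_mono[OF insert.prems(3) sub2] .
  have d2b: "dep (- F v) (g w)" if w: "w \<in> W" for w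
  proof -
    have "v \<noteq> w" using w insert.hyps by blast
    then have "F v \<inter> F w = {}" using insert.prems(2)[of v w] w by simp
    then have s3: "F w \<subseteq> - F v" by blast
    have "dep (F w) (g w)" using insert.prems(4)[of w] w by simp
    then show ?thesis using dep_mono s3 by blast
  qed
  have d2: "dep (- F v) (\<lambda>G. \<phi> G * (\<Prod>w\<in>W. g w G))"
    by (rule dep_mult[OF d2a dep_prod[OF d2b]])
  have "measure_pmf.expectation ?M (\<lambda>G. \<phi> G * (\<Prod>w\<in>insert v W. g w G)) =
        measure_pmf.expectation ?M (\<lambda>G. g v G * (\<phi> G * (\<Prod>w\<in>W. g w G)))"
    using insert.hyps by (simp add: mult.assoc mult.left_commute)
  also have "\<dots> = measure_pmf.expectation ?M (g v) * measure_pmf.expectation ?M (\<lambda>G. \<phi> G * (\<Prod>w\<in>W. g w G))"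
    using insert.prems(1)[of v] by (intro indep_split[OF finE _ d1 d2]) simp
  also have "measure_pmf.expectation ?M (\<lambda>G. \<phi> G * (\<Prod>w\<in>W. g w G)) =
     measure_pmf.expectation ?M \<phi> * (\<Prod>w\<in>W. measure_pmf.expectation ?M (g w))"
  proof (rule insert.IH)
    show "\<And>w. w \<in> W \<Longrightarrow> F w \<subseteq> E" using insert.prems(1) by simp
    show "\<And>u w. u \<in> W \<Longrightarrow> w \<in> W \<Longrightarrow> u \<noteq> w \<Longrightarrow> F u \<inter> F w = {}" using insert.prems(2) by simp
    show "dep (- (\<Union>w\<in>W. F w)) \<phi>" by (rule dphi)
    show "\<And>w. w \<in> W \<Longrightarrow> dep (F w) (g w)" using insert.prems(4) by simp
  qed
  finally show ?case using insert.hyps by (simp add: mult.assoc mult.left_commute)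
qed

lemma block_bound:
  fixes M :: "'x pmf" and h g :: "'x \<Rightarrow> real"
  assumes fin: "finite (set_pmf M)"
    and h01: "\<And>x. 0 \<le> h x \<and> h x \<le> 1"
    and gle: "\<And>x. g x \<le> h x - \<delta> * indicator D x"
    and d: "0 \<le> \<delta>"
  shows "measure_pmf.expectation M g \<le> measure_pmf.expectation M h * exp (- (\<delta> * measure_pmf.prob M D))"
proof -
  have int: "integrable M f" for f :: "'x \<Rightarrow> real" using fin by (rule integrable_measure_pmf_finite)
  have "measure_pmf.expectation M g \<le> measure_pmf.expectation M (\<lambda>x. h x - \<delta> * indicator D x)"
    by (intro integral_mono int gle)
  also have "\<dots> = measure_pmf.expectation M h - \<delta> * measure_pmf.prob M D"
    using int by (simp add: Bochner_Integration.integral_diff)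
  finally have 1: "measure_pmf.expectation M g \<le> measure_pmf.expectation M h - \<delta> * measure_pmf.prob M D" .
  have h0: "0 \<le> measure_pmf.expectation M h" using h01 by (simp add: integral_nonneg_AE)
  have h1: "measure_pmf.expectation M h \<le> 1"
  proof -
    have "measure_pmf.expectation M h \<le> measure_pmf.expectation M (\<lambda>_. 1::real)"
      by (intro integral_mono int) (use h01 in auto)
    then show ?thesis by simp
  qed
  have P0: "0 \<le> \<delta> * measure_pmf.prob M D" using d by simp
  have "measure_pmf.expectation M h - \<delta> * measure_pmf.prob M D \<le>
        measure_pmf.expectation M h * (1 - \<delta> * measure_pmf.prob M D)"
  proof -
    have "measure_pmf.expectation M h * (\<delta> * measure_pmf.prob M D) \<le> \<delta> * measure_pmf.prob M D"
      by (rule mult_left_le_one_le[OF P0 h0 h1])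
    then show ?thesis by (simp add: right_diff_distrib)
  qed
  also have "\<dots> \<le> measure_pmf.expectation M h * exp (- (\<delta> * measure_pmf.prob M D))"
    using exp_ge_add_one_self[of "- (\<delta> * measure_pmf.prob M D)"] by (intro mult_left_mono h0) simp
  finally show ?thesis using 1 by linarith
qed


lemma finite_all_edges: "finite (all_edges n)"
proof -
  have "all_edges n \<subseteq> Pow {1..n}" unfolding all_edges_def by auto
  then show ?thesis by (rule finite_subset) simp
qed

lemma deg_card:
  assumes "v \<notin> Z0"
  shows "deg G Z0 v = card {e \<in> (\<lambda>z. {v,z}) ` Z0. G e}"
proof -
  have "{e \<in> (\<lambda>z. {v,z}) ` Z0. G e} = (\<lambda>z. {v,z}) ` {z\<in>Z0. adj G v z}"
    using assms unfolding adj_def by auto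
  moreover have "inj_on (\<lambda>z. {v,z}) {z\<in>Z0. adj G v z}"
    by (auto simp: inj_on_def doubleton_eq_iff)
  ultimately show ?thesis unfolding deg_def by (simp add: card_image)
qed

lemma edges_sub:
  assumes "v \<in> {1..n}" "Z0 \<subseteq> {1..n}" "v \<notin> Z0"
  shows "(\<lambda>z. {v,z}) ` Z0 \<subseteq> all_edges n"
  using assms unfolding all_edges_def by blast

lemma deg_dist:
  assumes p: "p \<in> {0..1}" and v: "v \<in> {1..n}" and Z: "Z0 \<subseteq> {1..n}" "v \<notin> Z0"
  shows "map_pmf (\<lambda>G. deg G Z0 v) (gnp n p) = binomial_pmf (card Z0) p"
proof -
  define F where "F = (\<lambda>z. {v,z}) ` Z0"
  have FE: "F \<subseteq> all_edges n" unfolding F_def using edges_sub[OF v Z] .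
  have finZ: "finite Z0" using Z finite_subset by blast
  have cF: "card F = card Z0" unfolding F_def
    by (intro card_image) (auto simp: inj_on_def doubleton_eq_iff)
  have "map_pmf (\<lambda>G. deg G Z0 v) (gnp n p) = map_pmf (\<lambda>G. card {e\<in>F. G e}) (gnp n p)"
    using deg_card[OF Z(2)] unfolding F_def by simp
  also have "\<dots> = map_pmf (\<lambda>G. card {e\<in>F. G e}) (map_pmf (\<lambda>f x. if x \<in> F then f x else False) (gnp n p))"
    unfolding pmf.map_comp o_def by (intro map_pmf_cong refl arg_cong[where f=card]) auto
  also have "map_pmf (\<lambda>f x. if x \<in> F then f x else False) (gnp n p) = Pi_pmf F False (\<lambda>_. bernoulli_pmf p)"
    unfolding gnp_def by (rule Pi_pmf_subset[symmetric]) (use finite_all_edges FE in auto)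
  also have "map_pmf (\<lambda>G. card {e\<in>F. G e}) \<dots> = binomial_pmf (card F) p"
    by (rule binomial_pmf_altdef'[symmetric]) (use finZ p in \<open>auto simp: F_def\<close>)
  finally show ?thesis using cF by simp
qed

lemma prob_deg:
  assumes p: "p \<in> {0..1}" and v: "v \<in> {1..n}" and Z: "Z0 \<subseteq> {1..n}" "v \<notin> Z0"
  shows "measure_pmf.prob (gnp n p) {G. deg G Z0 v = k} = pmf (binomial_pmf (card Z0) p) k"
proof -
  have "measure_pmf.prob (gnp n p) {G. deg G Z0 v = k} = measure_pmf.prob (map_pmf (\<lambda>G. deg G Z0 v) (gnp n p)) {k}"
    by (simp add: vimage_def)
  also have "\<dots> = pmf (binomial_pmf (card Z0) p) k"
    using deg_dist[OF assms] by (simp add: measure_pmf_single)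
  finally show ?thesis .
qed

lemma binom_lb: "k \<le> m \<Longrightarrow> (real m - real k) ^ k \<le> fact k * real (m choose k)"
proof (induction k arbitrary: m)
  case 0 then show ?case by simp
next
  case (Suc k)
  then obtain m' where m: "m = Suc m'" by (cases m) auto
  have km: "k \<le> m'" using Suc.prems m by simp
  have IH: "(real m' - real k) ^ k \<le> fact k * real (m' choose k)" using Suc.IH[OF km] .
  have e: "real m * real (m' choose k) = real (m choose Suc k) * real (Suc k)"
    using Suc_times_binomial_eq[of m' k] unfolding m by (metis of_nat_mult)
  have nn: "0 \<le> real m - real (Suc k)" using Suc.prems by simp
  have "(real m - real (Suc k)) ^ Suc k = (real m - real (Suc k)) * (real m' - real k) ^ k"
    using m by simp
  also have "\<dots> \<le> real m * (fact k * real (m' choose k))"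
    by (intro mult_mono IH nn) (use km in auto)
  also have "\<dots> = fact (Suc k) * real (m choose Suc k)"
    using e by (simp add: algebra_simps)
  finally show ?case .
qed

lemma core_ineq:
  fixes r tt k :: nat and P x nn s :: real
  assumes rk: "r = Suc k" and k1: "k \<ge> 1" and P0: "P > 0" and P1: "P \<le> 1"
    and xbig: "x \<ge> 100 * real r ^ 2" and xP: "x * P \<le> 1/100"
    and tt1: "real tt \<le> x" and tt2: "real tt \<ge> x - 1"
    and xk: "x ^ k = fact r / (nn * P ^ r)" and nn0: "nn > 0"
    and xn: "x \<le> nn / 100" and sn: "s \<le> nn / 100"
  shows "real (tt choose k) * P ^ k * (1 - P) ^ (tt - k) * (nn - real tt - s) \<ge> (9/10) * real r / P"
proof -
  have r2: "real r \<ge> 2" using rk k1 by simp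
  have x0: "x > 0" using xbig r2 by (smt (verit) zero_less_power)
  have "100 * real r ^ 2 \<ge> 100 * real r" using r2 by (simp add: power2_eq_square)
  then have xr: "x \<ge> 100 * real r" using xbig by linarith
  have ktt: "k \<le> tt" using tt2 xr rk by simp
  have a1: "(real tt - real k) ^ k \<le> fact k * real (tt choose k)" by (rule binom_lb[OF ktt])
  have a2: "x - real r \<le> real tt - real k" using tt2 rk by simp
  have a3: "0 \<le> x - real r" using xr r2 by simp
  have a4: "(x - real r) ^ k \<le> (real tt - real k) ^ k" by (intro power_mono a2 a3)
  have b1: "x - real r = x * (1 + (- real r / x))" using x0 by (simp add: field_simps)
  have b2: "-1 \<le> - real r / x" using x0 xr by (simp add: field_simps)
  have b3: "1 + real k * (- real r / x) \<le> (1 + (- real r / x)) ^ k"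
    by (rule Bernoulli_inequality[OF b2])
  have "real k * real r \<le> real r ^ 2" using rk by (simp add: power2_eq_square)
  then have "real k * real r / x \<le> 1/100" using x0 xbig by (simp add: field_simps)
  then have b4: "99/100 \<le> 1 + real k * (- real r / x)" by simp
  have b5: "x ^ k * (99/100) \<le> (x - real r) ^ k"
  proof -
    have "x ^ k * (99/100) \<le> x ^ k * (1 + (- real r / x)) ^ k"
    proof (rule mult_left_mono)
      show "99/100 \<le> (1 + (- real r / x)) ^ k" using b3 b4 by linarith
      show "0 \<le> x ^ k" using x0 by simp
    qed
    also have "\<dots> = (x - real r) ^ k" unfolding b1 by (simp add: power_mult_distrib)
    finally show ?thesis .
  qed
  have B: "x ^ k * (99/100) / fact k \<le> real (tt choose k)"
    using b5 a4 a1 by (simp add: field_simps)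
  have c1: "(1 - P) ^ tt \<le> (1 - P) ^ (tt - k)" using P0 P1 by (intro power_decreasing) auto
  have c2: "1 + real tt * (- P) \<le> (1 + (- P)) ^ tt" using P1 by (intro Bernoulli_inequality) simp
  have c3: "real tt * P \<le> 1/100" using tt1 xP P0 by (smt (verit) mult_right_mono)
  have C: "99/100 \<le> (1 - P) ^ (tt - k)" using c1 c2 c3 by simp
  have d1: "fact r = real r * fact k" using rk by simp
  have d2: "P ^ r = P ^ k * P" using rk by simp
  have D: "x ^ k * P ^ k / fact k = real r / (nn * P)"
    unfolding xk d1 d2 using P0 nn0 by (simp add: field_simps)
  have q: "real (tt choose k) * P ^ k * (1 - P) ^ (tt - k) \<ge> (99/100) * (99/100) * (real r / (nn * P))"
  proof -
    have "(99/100) * (99/100) * (real r / (nn * P)) = (99/100) * (99/100) * (x ^ k * P ^ k / fact k)"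
      by (simp only: D)
    also have "\<dots> = ((x ^ k * (99/100) / fact k) * P ^ k) * (99/100)"
      by (simp add: field_simps)
    also have "\<dots> \<le> (real (tt choose k) * P ^ k) * (1 - P) ^ (tt - k)"
      using B C P0 by (intro mult_mono) auto
    finally show ?thesis by simp
  qed
  have e: "nn - real tt - s \<ge> (98/100) * nn" using tt1 xn sn by simp
  have q0: "0 \<le> (99/100) * (99/100) * (real r / (nn * P))" using P0 nn0 by simp
  have "(9/10) * real r / P \<le> ((99/100) * (99/100) * (real r / (nn * P))) * ((98/100) * nn)"
    using P0 nn0 r2 by (simp add: field_simps)
  also have "\<dots> \<le> (real (tt choose k) * P ^ k * (1 - P) ^ (tt - k)) * (nn - real tt - s)"
    using q e q0 nn0 by (rule_tac mult_mono) auto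
  finally show ?thesis .
qed

lemma pow_le_base: "k \<ge> 1 \<Longrightarrow> 0 \<le> (b::real) \<Longrightarrow> a ^ k \<le> b ^ k \<Longrightarrow> a \<le> b"
  by (cases k) (auto intro: power_le_imp_le_base)

lemma asym:
  fixes r :: nat and p :: "nat \<Rightarrow> real" and S :: "nat \<Rightarrow> nat set"
  assumes r2: "r \<ge> 2" and A1: "(\<lambda>n. 1 / real n) \<in> o(p)"
    and A2: "p \<in> o(\<lambda>n. real n powr (- 1 / real r))"
    and A3: "(\<lambda>n. real (card (S n))) \<in> o(\<lambda>n. real n)"
  shows "\<forall>\<^sub>F n in sequentially. p n > 0 \<longrightarrow> (p n \<le> 1/2 \<and>
     (9/10) * real r / p n \<le> pmf (binomial_pmf (t0 r n (p n)) (p n)) (r - 1) *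
        (real n - real (t0 r n (p n)) - real (card (S n))))"
proof -
  define k where "k = r - 1"
  have rk: "r = Suc k" and k1: "k \<ge> 1" using r2 unfolding k_def by auto
  define X0 :: real where "X0 = 100 * real r ^ 2"
  have "(2::real) ^ 2 \<le> real r ^ 2" using r2 by (intro power_mono) auto
  then have X0ge: "X0 \<ge> 400" unfolding X0_def by simp
  define c1 :: real where "c1 = 1 / X0 ^ k"
  define c2 :: real where "c2 = (1/100) ^ k / fact r"
  have X0k: "X0 ^ k \<ge> 400" proof -
    have "X0 ^ 1 \<le> X0 ^ k" using X0ge k1 by (intro power_increasing) auto
    then show ?thesis using X0ge by simp
  qed
  have c1pos: "c1 > 0" and c1le: "c1 \<le> 1/2" unfolding c1_def using X0k by (auto simp: field_simps)
  have c2pos: "c2 > 0" unfolding c2_def by simp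
  have c2le: "c2 \<le> 1" unfolding c2_def
  proof -
    have "(1/100::real) ^ k \<le> 1" by (simp add: power_le_one)
    also have "1 \<le> (fact r :: real)" by simp
    finally show "(1/100::real) ^ k / fact r \<le> 1" by (simp add: field_simps)
  qed
  have E1: "\<forall>\<^sub>F n in sequentially. norm (p n) \<le> c1 * norm (real n powr (- 1 / real r))"
    by (rule landau_o.smallD[OF A2 c1pos])
  have E2: "\<forall>\<^sub>F n in sequentially. norm (1 / real n) \<le> c2 * norm (p n)"
    by (rule landau_o.smallD[OF A1 c2pos])
  have E3: "\<forall>\<^sub>F n in sequentially. norm (real (card (S n))) \<le> (1/100) * norm (real n)"
    by (rule landau_o.smallD[OF A3]) simp
  have E4: "\<forall>\<^sub>F n in sequentially. n \<ge> 1" by (rule eventually_ge_at_top)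
  show ?thesis
    using E1 E2 E3 E4
  proof eventually_elim
    case (elim n)
    show ?case
    proof
      assume P0: "p n > 0"
      define P where "P = p n"
      have P0': "P > 0" using P0 P_def by simp
      have n1: "real n \<ge> 1" using elim(4) by simp
      define u where "u = real n powr (1 / real r)"
      have u1: "u \<ge> 1" unfolding u_def using n1 r2 by (intro ge_one_powr_ge_zero) auto
      have ur: "u ^ r = real n" unfolding u_def using n1 r2
        by (simp add: powr_powr flip: powr_realpow)
      have inv: "real n powr (- 1 / real r) = 1 / u" unfolding u_def using n1
        by (simp add: powr_minus_divide divide_inverse powr_minus)
      have Pu: "P \<le> c1 / u" using elim(1) P0' inv u1 unfolding P_def by simp
      have "c1 / u \<le> c1 / 1" using u1 c1pos by (intro divide_left_mono) auto
      then have Pc1: "P \<le> c1" using Pu by simp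
      have Pr: "P ^ r \<le> (c1 / u) ^ r" using Pu P0' by (intro power_mono) auto
      also have "\<dots> = c1 ^ r / real n" using ur by (simp add: power_divide)
      finally have nPr: "real n * P ^ r \<le> c1 ^ r" using n1 by (simp add: field_simps)
      have c1r: "c1 ^ r \<le> c1" using c1pos c1le r2 power_decreasing[of 1 r c1] by simp
      define y where "y = fact r / (real n * P ^ r)"
      have nPr0: "real n * P ^ r > 0" using n1 P0' by simp
      have ypos: "y > 0" unfolding y_def using nPr0 by simp
      have "X0 ^ k = 1 / c1" unfolding c1_def by simp
      also have "\<dots> \<le> fact r / c1" using c1pos by (simp add: divide_right_mono)
      also have "\<dots> \<le> y" unfolding y_def using nPr nPr0 c1r c1pos
        by (intro divide_left_mono) auto
      finally have yX: "X0 ^ k \<le> y" .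
      define x where "x = y powr (1 / real k)"
      have x0: "x > 0" unfolding x_def using ypos by simp
      have xk: "x ^ k = y"
      proof -
        have "x ^ k = x powr (real k)" using x0 by (simp add: powr_realpow)
        also have "\<dots> = y powr (1 / real k * real k)" unfolding x_def by (rule powr_powr)
        also have "1 / real k * real k = 1" using k1 by simp
        finally show ?thesis using ypos by simp
      qed
      have xbig: "x \<ge> X0"
      proof (rule pow_le_base[OF k1])
        show "0 \<le> x" using x0 by simp
        show "X0 ^ k \<le> x ^ k" using yX xk by simp
      qed
      have E2': "1 / (real n * P) \<le> c2" using elim(2) P0' n1 unfolding P_def by (simp add: field_simps)
      have "(x * P) ^ k = fact r / (real n * P)"
        unfolding power_mult_distrib xk y_def using rk P0' n1 by (simp add: field_simps)
      also have "\<dots> \<le> fact r * c2" using E2' by (simp add: divide_inverse mult_left_mono)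
      also have "\<dots> = (1/100) ^ k" unfolding c2_def by simp
      finally have "(x * P) ^ k \<le> (1/100) ^ k" .
      then have xP: "x * P \<le> 1/100" by (rule pow_le_base[OF k1, rotated]) simp
      have xn: "x \<le> real n / 100"
      proof -
        have "x = (x * P) * (1 / P)" using P0' by simp
        also have "\<dots> \<le> (1/100) * (c2 * real n)"
        proof (intro mult_mono xP)
          show "1 / P \<le> c2 * real n" using E2' n1 P0' by (simp add: field_simps)
        qed (use x0 P0' in auto)
        also have "\<dots> \<le> real n / 100" using c2le n1 by simp
        finally show ?thesis .
      qed
      have sn: "real (card (S n)) \<le> real n / 100" using elim(3) by simp
      define tt where "tt = t0 r n P"
      have tteq: "tt = nat \<lfloor>x\<rfloor>" unfolding tt_def t0_def x_def y_def using rk by simp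
      have tt1: "real tt \<le> x" unfolding tteq using x0 by linarith
      have tt2: "real tt \<ge> x - 1" unfolding tteq using x0 by linarith
      have P1: "P \<le> 1" using Pc1 c1le by simp
      have core: "real (tt choose k) * P ^ k * (1 - P) ^ (tt - k) * (real n - real tt - real (card (S n))) \<ge> (9/10) * real r / P"
        by (rule core_ineq[OF rk k1 P0' P1 _ xP tt1 tt2 _ _ xn sn])
           (use xbig X0_def xk y_def n1 in auto)
      have pm: "pmf (binomial_pmf tt P) (r - 1) = real (tt choose k) * P ^ k * (1 - P) ^ (tt - k)"
        using P0' P1 unfolding k_def by (simp add: pmf_binomial)
      show "p n \<le> 1/2 \<and> (9/10) * real r / p n \<le> pmf (binomial_pmf (t0 r n (p n)) (p n)) (r - 1) *
        (real n - real (t0 r n (p n)) - real (card (S n)))"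
        using core pm Pc1 c1le unfolding tt_def P_def by simp
    qed
  qed
qed

lemma prob_eq_exp_ind: "measure_pmf.prob M A = measure_pmf.expectation M (indicator A :: _ \<Rightarrow> real)"
  by (simp add: measure_pmf.emeasure_eq_measure)

context proc begin

lemma main_bound:
  fixes P :: real and S :: "nat set" and tt :: nat and A0 Z0 :: "nat set"
  assumes r2: "r \<ge> 2" and P0: "0 < P" and P1: "P \<le> 1/2"
    and PC: "measure_pmf.prob (gnp n P) (Cset tt A0 Z0) > 0"
    and finS: "finite S"
    and key: "9/10 * real r / P \<le> pmf (binomial_pmf tt P) (r - 1) * (real n - real tt - real (card S))"
  defines "B \<equiv> {G. real (card {v \<in> {1..n} - (Zp n a r rule G tt \<union> S).
                     r - 1 \<le> card {z \<in> Zp n a r rule G tt. adj G v z}}) < 3 * real r / (4 * P)}"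
  shows "measure_pmf.prob (gnp n P) (B \<inter> Cset tt A0 Z0) / measure_pmf.prob (gnp n P) (Cset tt A0 Z0)
           \<le> exp (- (1/100) / P)"
proof -
  define C where "C = Cset tt A0 Z0"
  define M where "M = gnp n P"
  have Cne: "C \<noteq> {}" using PC unfolding C_def by auto
  then obtain G0 where G0: "G0 \<in> C" by blast
  have Z0: "Z0 = set (explore n a r rule G0 tt)" and st0: "tt \<le> stop_time n a r rule G0"
    using G0 unfolding C_def Cset_def Zp_def by auto
  have cardZ: "card Z0 = tt" using card_Z_at[OF st0] Z0 by (simp add: Zp_def)
  have Zsub: "Z0 \<subseteq> {1..n}" using explore_sub Z0 by simp
  have finZ: "finite Z0" using Z0 by simp
  have inA: "A0 = infected n a r G0 Z0" using G0 Z0 unfolding C_def Cset_def Ap_def Zp_def by simp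
  define W where "W = {v \<in> {1..n}. v \<notin> Z0 \<and> v \<notin> S \<and> (a < v \<longrightarrow> v \<notin> A0)}"
  define K where "K = {v \<in> {1..n}. v \<notin> Z0 \<and> v \<notin> S \<and> a < v \<and> v \<in> A0}"
  define Fv where "Fv = (\<lambda>v. (\<lambda>z. {v,z}) ` Z0)"
  define Fall where "Fall = (\<Union>v\<in>W. Fv v)"
  define clear where "clear = (\<lambda>(G::nat set \<Rightarrow> bool) e. if e \<in> Fall then False else G e)"
  define hv where "hv = (\<lambda>v G. if v \<le> a \<or> deg G Z0 v < r then 1 else (0::real))"
  define Dv where "Dv = (\<lambda>v G. if r - 1 \<le> deg G Z0 v then 1 else (0::real))"
  define lam :: real where "lam = 1/10"
  define gv where "gv = (\<lambda>v G. hv v G * exp (- lam * Dv v G))"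
  define \<phi> where "\<phi> = (\<lambda>G. indicator C (clear G) :: real)"
  define \<theta> where "\<theta> = 3 * real r / (4 * P)"
  have finW: "finite W" unfolding W_def by simp
  have finK: "finite K" unfolding K_def by simp
  have WZ: "W \<inter> Z0 = {}" unfolding W_def by blast
  have notF: "{v, z} \<notin> Fall" if "v \<notin> W" "z \<in> Z0" for v z
  proof
    assume "{v, z} \<in> Fall"
    then obtain w z' where w: "w \<in> W" "z' \<in> Z0" "{v, z} = {w, z'}" unfolding Fall_def Fv_def by blast
    then have "v = w \<or> (v = z' \<and> z = w)" by (auto simp: doubleton_eq_iff)
    then show False using w that WZ by blast
  qed
  have adj_clear: "adj (clear G) v z = adj G v z" if "v \<notin> W" "z \<in> Z0" for G v z
    using notF[OF that] unfolding adj_def clear_def by simp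
  have deg_clear: "deg (clear G) Z0 v = 0" if "v \<in> W" for G v
  proof -
    have inF: "{v,z} \<in> Fall" if "z \<in> Z0" for z
      using that \<open>v \<in> W\<close> unfolding Fall_def Fv_def by blast
    have e: "{z \<in> Z0. adj (clear G) v z} = {}"
      using inF unfolding adj_def clear_def by auto
    show ?thesis unfolding deg_def e by simp
  qed
  have Ainf: "infected n a r G Z0 = A0" if "G \<in> C" for G
    using that unfolding C_def Cset_def Ap_def by auto
  have degA: "deg G Z0 v < r" if "G \<in> C" "v \<in> W" "a < v" for G v
  proof -
    have "v \<notin> A0" "v \<in> {a+1..n}" using that(2,3) unfolding W_def by auto
    then show ?thesis using Ainf[OF that(1)] unfolding infected_def deg_def by auto
  qed
  have ZpC: "Zp n a r rule G tt = Z0" if "G \<in> C" for G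
    using that unfolding C_def Cset_def by simp
  have C_iff: "G \<in> C \<longleftrightarrow> clear G \<in> C \<and> (\<forall>v\<in>W. hv v G = 1)" for G
  proof
    assume G: "G \<in> C"
    have h: "\<forall>v\<in>W. hv v G = 1"
    proof
      fix v assume v: "v \<in> W"
      show "hv v G = 1"
      proof (cases "v \<le> a")
        case False then show ?thesis using degA[OF G v] unfolding hv_def by simp
      qed (simp add: hv_def)
    qed
    have "clear G \<in> Cset tt A0 Z0"
    proof (rule C_transfer)
      show "G \<in> Cset tt A0 Z0" using G unfolding C_def .
      fix v assume v: "v \<in> {a+1..n}"
      show "(\<forall>z\<in>Z0. adj G v z = adj (clear G) v z) \<or> (deg G Z0 v < r \<and> deg (clear G) Z0 v < r)"
      proof (cases "v \<in> W")
        case True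
        then show ?thesis using degA[OF G True] v deg_clear[OF True] r2 by simp
      next
        case False
        then show ?thesis using adj_clear[OF False] by simp
      qed
    qed
    then show "clear G \<in> C \<and> (\<forall>v\<in>W. hv v G = 1)" using h unfolding C_def by simp
  next
    assume A: "clear G \<in> C \<and> (\<forall>v\<in>W. hv v G = 1)"
    have "G \<in> Cset tt A0 Z0"
    proof (rule C_transfer)
      show "clear G \<in> Cset tt A0 Z0" using A unfolding C_def by simp
      fix v assume v: "v \<in> {a+1..n}"
      show "(\<forall>z\<in>Z0. adj (clear G) v z = adj G v z) \<or> (deg (clear G) Z0 v < r \<and> deg G Z0 v < r)"
      proof (cases "v \<in> W")
        case True
        have "hv v G = 1" using A True by blast
        then have "deg G Z0 v < r" using v unfolding hv_def by (auto split: if_splits)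
        then show ?thesis using deg_clear[OF True] r2 by simp
      next
        case False
        then show ?thesis using adj_clear[OF False] by simp
      qed
    qed
    then show "G \<in> C" unfolding C_def .
  qed
  have hv01: "hv v G = 0 \<or> hv v G = 1" for v G unfolding hv_def by simp
  have prod01: "(\<Prod>v\<in>W. hv v G) = (if \<forall>v\<in>W. hv v G = 1 then 1 else 0)" for G
  proof (cases "\<forall>v\<in>W. hv v G = 1")
    case True then show ?thesis by simp
  next
    case False
    then obtain v where v: "v \<in> W" "hv v G \<noteq> 1" by blast
    then have "hv v G = 0" using hv01 by blast
    then show ?thesis using v finW False by (simp add: prod_zero_iff) blast
  qed
  have claim1: "indicator C G = \<phi> G * (\<Prod>v\<in>W. hv v G)" for G
    unfolding \<phi>_def prod01 using C_iff[of G] by (simp add: indicator_def)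
  have hv_nonneg: "0 \<le> hv v G" for v G unfolding hv_def by simp
  have gv_nonneg: "0 \<le> gv v G" for v G unfolding gv_def using hv_nonneg by simp
  have phi_nonneg: "0 \<le> \<phi> G" for G unfolding \<phi>_def by simp
  have Dsum: "(\<Sum>v\<in>W. Dv v G) = real (card {v\<in>W. r - 1 \<le> deg G Z0 v})" for G
    unfolding Dv_def using finW by (simp add: sum.If_cases Int_def conj_commute)
  have gprod: "\<phi> G * (\<Prod>v\<in>W. gv v G) = indicator C G * exp (- lam * (\<Sum>v\<in>W. Dv v G))" for G
  proof -
    have "(\<Prod>v\<in>W. gv v G) = (\<Prod>v\<in>W. hv v G) * (\<Prod>v\<in>W. exp (- lam * Dv v G))"
      unfolding gv_def by (rule prod.distrib)
    also have "(\<Prod>v\<in>W. exp (- lam * Dv v G)) = exp (\<Sum>v\<in>W. - lam * Dv v G)"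
      using finW by (rule exp_sum[symmetric])
    also have "(\<Sum>v\<in>W. - lam * Dv v G) = - lam * (\<Sum>v\<in>W. Dv v G)"
      by (simp add: sum_distrib_left)
    finally show ?thesis using claim1[of G] by (simp add: mult.assoc)
  qed
  have KW: "K \<inter> W = {}" unfolding K_def W_def by blast
  have claim2: "indicator (B \<inter> C) G \<le> exp (lam * (\<theta> - real (card K))) * (\<phi> G * (\<Prod>v\<in>W. gv v G))" for G
  proof (cases "G \<in> B \<inter> C")
    case False
    then show ?thesis using phi_nonneg gv_nonneg by (simp add: prod_nonneg)
  next
    case True
    then have GB: "G \<in> B" and GC: "G \<in> C" by auto
    define T where "T = {v \<in> {1..n} - (Z0 \<union> S). r - 1 \<le> card {z \<in> Z0. adj G v z}}"
    have Tlt: "real (card T) < \<theta>" using GB ZpC[OF GC] unfolding B_def T_def \<theta>_def by simp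
    have KT: "K \<subseteq> T"
    proof
      fix v assume v: "v \<in> K"
      then have "v \<in> infected n a r G Z0" "a < v" using Ainf[OF GC] unfolding K_def by auto
      then have "r \<le> card {z \<in> Z0. adj G v z}" unfolding infected_def by auto
      then show "v \<in> T" using v unfolding T_def K_def by auto
    qed
    have WT: "{v\<in>W. r - 1 \<le> deg G Z0 v} \<subseteq> T" unfolding T_def W_def deg_def by auto
    have finT: "finite T" unfolding T_def by simp
    have "card K + card {v\<in>W. r - 1 \<le> deg G Z0 v} = card (K \<union> {v\<in>W. r - 1 \<le> deg G Z0 v})"
      using KW finK finW by (intro card_Un_disjoint[symmetric]) auto
    also have "\<dots> \<le> card T" using KT WT finT by (intro card_mono) auto
    finally have "real (card K) + (\<Sum>v\<in>W. Dv v G) < \<theta>" using Tlt Dsum[of G] by linarith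
    then have "0 \<le> lam * (\<theta> - real (card K)) + - lam * (\<Sum>v\<in>W. Dv v G)"
      unfolding lam_def by simp
    then have e1: "1 \<le> exp (lam * (\<theta> - real (card K)) + - lam * (\<Sum>v\<in>W. Dv v G))" by simp
    have "exp (lam * (\<theta> - real (card K))) * (\<phi> G * (\<Prod>v\<in>W. gv v G)) =
          exp (lam * (\<theta> - real (card K))) * exp (- lam * (\<Sum>v\<in>W. Dv v G))"
      unfolding gprod[of G] using GC by simp
    also have "\<dots> = exp (lam * (\<theta> - real (card K)) + - lam * (\<Sum>v\<in>W. Dv v G))"
      by (rule exp_add[symmetric])
    finally show ?thesis using e1 True by simp
  qed
  define E where "E = all_edges n"
  have MPi: "M = Pi_pmf E False (\<lambda>_. bernoulli_pmf P)" unfolding M_def E_def gnp_def by simp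
  have finE: "finite E" unfolding E_def by (rule finite_all_edges)
  have finM: "finite (set_pmf M)" unfolding MPi by (rule finite_set_Pi_pmf_bool[OF finE])
  have intM: "integrable M f" for f :: "_ \<Rightarrow> real" using finM by (rule integrable_measure_pmf_finite)
  have Wn: "v \<in> {1..n}" "v \<notin> Z0" if "v \<in> W" for v using that unfolding W_def by auto
  have Fsub: "Fv v \<subseteq> E" if "v \<in> W" for v
    unfolding Fv_def E_def using edges_sub[OF Wn(1)[OF that] Zsub Wn(2)[OF that]] .
  have disj: "Fv v \<inter> Fv w = {}" if "v \<in> W" "w \<in> W" "v \<noteq> w" for v w
  proof (rule ccontr)
    assume "Fv v \<inter> Fv w \<noteq> {}"
    then obtain z z' where zz: "z \<in> Z0" "z' \<in> Z0" "{v,z} = {w,z'}" unfolding Fv_def by blast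
    then have "v = w \<or> v = z'" by (auto simp: doubleton_eq_iff)
    then show False using that zz Wn(2)[OF that(1)] by blast
  qed
  have dphi: "dep (- (\<Union>v\<in>W. Fv v)) \<phi>"
    unfolding dep_def
  proof (intro allI impI)
    fix G G2 :: "nat set \<Rightarrow> bool" assume ag: "\<forall>e\<in>- (\<Union>v\<in>W. Fv v). G e = G2 e"
    have "clear G = clear G2" unfolding clear_def Fall_def using ag by (intro ext) auto
    then show "\<phi> G = \<phi> G2" unfolding \<phi>_def by simp
  qed
  have deg_dep: "deg G Z0 v = deg G2 Z0 v" if "v \<in> W" "\<forall>e\<in>Fv v. G e = G2 e" for v G G2
  proof -
    have "{e \<in> (\<lambda>z. {v,z}) ` Z0. G e} = {e \<in> (\<lambda>z. {v,z}) ` Z0. G2 e}"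
      using that(2) unfolding Fv_def by auto
    then show ?thesis using deg_card[OF Wn(2)[OF that(1)]] by metis
  qed
  have dh: "dep (Fv v) (hv v)" if "v \<in> W" for v
    unfolding dep_def
  proof (intro allI impI)
    fix G G2 :: "nat set \<Rightarrow> bool" assume "\<forall>e\<in>Fv v. G e = G2 e"
    then have "deg G Z0 v = deg G2 Z0 v" by (rule deg_dep[OF that])
    then show "hv v G = hv v G2" unfolding hv_def by simp
  qed
  have dgv: "dep (Fv v) (gv v)" if "v \<in> W" for v
    unfolding dep_def
  proof (intro allI impI)
    fix G G2 :: "nat set \<Rightarrow> bool" assume "\<forall>e\<in>Fv v. G e = G2 e"
    then have "deg G Z0 v = deg G2 Z0 v" by (rule deg_dep[OF that])
    then show "gv v G = gv v G2" unfolding gv_def hv_def Dv_def by simp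
  qed
  have EQ1: "measure_pmf.expectation M (\<lambda>G. \<phi> G * (\<Prod>v\<in>W. gv v G)) =
             measure_pmf.expectation M \<phi> * (\<Prod>v\<in>W. measure_pmf.expectation M (gv v))"
    unfolding MPi by (rule indep_blocks[OF finE finW Fsub disj dphi dgv]) auto
  have EQ2: "measure_pmf.expectation M (\<lambda>G. \<phi> G * (\<Prod>v\<in>W. hv v G)) =
             measure_pmf.expectation M \<phi> * (\<Prod>v\<in>W. measure_pmf.expectation M (hv v))"
    unfolding MPi by (rule indep_blocks[OF finE finW Fsub disj dphi dh]) auto
  have PCeq: "measure_pmf.prob M C = measure_pmf.expectation M \<phi> * (\<Prod>v\<in>W. measure_pmf.expectation M (hv v))"
    unfolding prob_eq_exp_ind claim1 EQ2[symmetric] ..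
  define q0 where "q0 = pmf (binomial_pmf tt P) (r - 1)"
  define \<delta> where "\<delta> = 1 - exp (- lam)"
  have Pin: "P \<in> {0..1}" using P0 P1 by simp
  have d0: "0 \<le> \<delta>" unfolding \<delta>_def lam_def by simp
  have claim4: "measure_pmf.expectation M (gv v) \<le> measure_pmf.expectation M (hv v) * exp (- (\<delta> * q0))"
    if v: "v \<in> W" for v
  proof -
    define D where "D = {G. deg G Z0 v = r - 1}"
    have pD: "measure_pmf.prob M D = q0"
      unfolding M_def D_def q0_def using prob_deg[OF Pin Wn(1)[OF v] Zsub Wn(2)[OF v]] cardZ by simp
    have h01: "0 \<le> hv v G \<and> hv v G \<le> 1" for G unfolding hv_def by simp
    have gle: "gv v G \<le> hv v G - \<delta> * indicator D G" for G
    proof (cases "G \<in> D")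
      case True
      then have "deg G Z0 v < r" "r - 1 \<le> deg G Z0 v" using r2 unfolding D_def by auto
      then show ?thesis using True unfolding gv_def hv_def Dv_def \<delta>_def by simp
    next
      case False
      have "exp (- lam * Dv v G) \<le> 1" unfolding Dv_def lam_def by simp
      then have "gv v G \<le> hv v G" unfolding gv_def using hv_nonneg[of v G]
        by (simp add: mult_left_le)
      then show ?thesis using False by simp
    qed
    show ?thesis using block_bound[OF finM h01 gle d0] pD by simp
  qed
  have Ehv0: "0 \<le> measure_pmf.expectation M (hv v)" for v using hv_nonneg by (simp add: integral_nonneg_AE)
  have Egv0: "0 \<le> measure_pmf.expectation M (gv v)" for v using gv_nonneg by (simp add: integral_nonneg_AE)
  have Ephi0: "0 \<le> measure_pmf.expectation M \<phi>" using phi_nonneg by (simp add: integral_nonneg_AE)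
  define L where "L = exp (lam * (\<theta> - real (card K)))"
  have "measure_pmf.prob M (B \<inter> C) = measure_pmf.expectation M (indicator (B \<inter> C))"
    by (rule prob_eq_exp_ind)
  also have "\<dots> \<le> measure_pmf.expectation M (\<lambda>G. L * (\<phi> G * (\<Prod>v\<in>W. gv v G)))"
    unfolding L_def by (intro integral_mono intM claim2)
  also have "\<dots> = L * (measure_pmf.expectation M \<phi> * (\<Prod>v\<in>W. measure_pmf.expectation M (gv v)))"
    by (simp add: EQ1)
  also have "\<dots> \<le> L * (measure_pmf.expectation M \<phi> * (\<Prod>v\<in>W. measure_pmf.expectation M (hv v) * exp (- (\<delta> * q0))))"
    unfolding L_def by (intro mult_left_mono prod_mono conjI Egv0 claim4 Ephi0) auto
  also have "\<dots> = L * exp (- (\<delta> * q0)) ^ card W * measure_pmf.prob M C"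
    unfolding PCeq by (simp add: prod.distrib)
  finally have main: "measure_pmf.prob M (B \<inter> C) \<le> L * exp (- (\<delta> * q0)) ^ card W * measure_pmf.prob M C" .
  have PCpos: "measure_pmf.prob M C > 0" using PC unfolding M_def C_def .
  have ratio: "measure_pmf.prob M (B \<inter> C) / measure_pmf.prob M C \<le> exp (lam * (\<theta> - real (card K)) - \<delta> * q0 * real (card W))"
  proof -
    have "measure_pmf.prob M (B \<inter> C) / measure_pmf.prob M C \<le> L * exp (- (\<delta> * q0)) ^ card W"
      using main PCpos by (simp add: divide_le_eq)
    also have "\<dots> = exp (lam * (\<theta> - real (card K))) * exp (real (card W) * (- (\<delta> * q0)))"
      unfolding L_def exp_of_nat_mult ..
    also have "\<dots> = exp (lam * (\<theta> - real (card K)) + real (card W) * (- (\<delta> * q0)))"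
      by (rule exp_add[symmetric])
    also have "lam * (\<theta> - real (card K)) + real (card W) * (- (\<delta> * q0)) = lam * (\<theta> - real (card K)) - \<delta> * q0 * real (card W)"
      by (simp add: algebra_simps)
    finally show ?thesis .
  qed
  have poolWK: "{1..n} - (Z0 \<union> S) = W \<union> K" unfolding W_def K_def by auto
  have "card {1..n} - card (Z0 \<union> S) \<le> card ({1..n} - (Z0 \<union> S))"
    using finZ finS by (intro diff_card_le_card_Diff) auto
  moreover have "card (Z0 \<union> S) \<le> card Z0 + card S" by (rule card_Un_le)
  moreover have "card (W \<union> K) = card W + card K" using KW finW finK by (intro card_Un_disjoint) auto
  ultimately have cWK: "real n - real tt - real (card S) \<le> real (card W) + real (card K)"
    using poolWK cardZ by simp
  have q00: "0 \<le> q0" unfolding q0_def by simp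
  have q01: "q0 \<le> 1" unfolding q0_def by (rule pmf_le_1)
  have dl: "\<delta> \<le> lam" unfolding \<delta>_def using exp_ge_add_one_self[of "- lam"] by simp
  have d11: "1/11 \<le> \<delta>"
  proof -
    have "1 + lam \<le> exp lam" by (rule exp_ge_add_one_self)
    then have "exp (- lam) \<le> 1 / (1 + lam)" unfolding lam_def by (simp add: exp_minus field_simps)
    then show ?thesis unfolding \<delta>_def lam_def by simp
  qed
  have dq: "\<delta> * q0 \<le> lam" using mult_left_le[OF q01 d0] dl by simp
  have s1: "lam * (\<theta> - real (card K)) - \<delta> * q0 * real (card W) \<le> lam * \<theta> - \<delta> * q0 * (real (card W) + real (card K))"
  proof -
    have "\<delta> * q0 * real (card K) \<le> lam * real (card K)" using dq by (intro mult_right_mono) auto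
    then show ?thesis by (simp add: algebra_simps)
  qed
  have s2: "\<delta> * (9/10 * real r / P) \<le> \<delta> * q0 * (real (card W) + real (card K))"
  proof -
    have "9/10 * real r / P \<le> q0 * (real (card W) + real (card K))"
      using key cWK q00 unfolding q0_def by (smt (verit) mult_left_mono)
    then have "\<delta> * (9/10 * real r / P) \<le> \<delta> * (q0 * (real (card W) + real (card K)))"
      using d0 by (rule mult_left_mono)
    then show ?thesis by (simp only: mult.assoc)
  qed
  have s3: "1/11 * (9/10 * real r / P) \<le> \<delta> * (9/10 * real r / P)"
    using d11 P0 by (intro mult_right_mono) auto
  have s4: "lam * \<theta> - 1/11 * (9/10 * real r / P) \<le> - (1/100) / P"
    unfolding lam_def \<theta>_def using P0 r2 by (simp add: field_simps)
  have "lam * (\<theta> - real (card K)) - \<delta> * q0 * real (card W) \<le> - (1/100) / P"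
    using s1 s2 s3 s4 by linarith
  then have "measure_pmf.prob M (B \<inter> C) / measure_pmf.prob M C \<le> exp (- (1/100) / P)"
    using ratio by (meson exp_le_cancel_iff order_trans)
  then show ?thesis unfolding M_def C_def .
qed

end

theorem lemma4:
  fixes r :: nat and p :: "nat \<Rightarrow> real" and a :: "nat \<Rightarrow> nat"
    and S :: "nat \<Rightarrow> nat set"
    and rule :: "nat \<Rightarrow> nat list \<Rightarrow> nat set \<Rightarrow> nat"
  assumes "r \<ge> 2"
    and "(\<lambda>n. 1 / real n) \<in> o(p)"
    and "p \<in> o(\<lambda>n. real n powr (- 1 / real r))"
    and "\<forall>n. a n \<le> n"
    and "\<forall>n. S n \<subseteq> {1..n}"
    and "(\<lambda>n. real (card (S n))) \<in> o(\<lambda>n. real n)"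
    and "\<forall>n us A. A - set us \<noteq> {} \<longrightarrow> rule n us A \<in> A - set us"
  shows "\<exists>c>0. \<forall>\<^sub>F n in sequentially. \<forall>A0 Z0.
     (let P = measure_pmf.prob (gnp n (p n));
          tt = t0 r n (p n);
          C = {G. tt \<le> stop_time n (a n) r (rule n) G
                  \<and> Ap n (a n) r (rule n) G tt = A0 \<and> Zp n (a n) r (rule n) G tt = Z0};
          B = {G. real (card {v \<in> {1..n} - (Zp n (a n) r (rule n) G tt \<union> S n).
                     r - 1 \<le> card {z \<in> Zp n (a n) r (rule n) G tt. adj G v z}})
                  < 3 * real r / (4 * p n)}
      in P C > 0 \<longrightarrow> P (B \<inter> C) / P C \<le> exp (- c / p n))"
proof (intro exI conjI)
  show "(1/100::real) > 0" by simp
  have H: "\<forall>\<^sub>F n in sequentially. p n > 0 \<longrightarrow> (p n \<le> 1/2 \<and>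
     (9/10) * real r / p n \<le> pmf (binomial_pmf (t0 r n (p n)) (p n)) (r - 1) *
        (real n - real (t0 r n (p n)) - real (card (S n))))"
    by (rule asym[OF assms(1,2,3,6)])
  show "\<forall>\<^sub>F n in sequentially. \<forall>A0 Z0.
     (let P = measure_pmf.prob (gnp n (p n));
          tt = t0 r n (p n);
          C = {G. tt \<le> stop_time n (a n) r (rule n) G
                  \<and> Ap n (a n) r (rule n) G tt = A0 \<and> Zp n (a n) r (rule n) G tt = Z0};
          B = {G. real (card {v \<in> {1..n} - (Zp n (a n) r (rule n) G tt \<union> S n).
                     r - 1 \<le> card {z \<in> Zp n (a n) r (rule n) G tt. adj G v z}})
                  < 3 * real r / (4 * p n)}
      in P C > 0 \<longrightarrow> P (B \<inter> C) / P C \<le> exp (- (1/100) / p n))"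
    using H
  proof eventually_elim
    case (elim n)
    interpret proc n "a n" r "rule n"
      by unfold_locales (use assms(4,7) in blast)+
    show ?case
    proof (intro allI)
      fix A0 Z0 :: "nat set"
      define tt where "tt = t0 r n (p n)"
      define C where "C = {G. tt \<le> stop_time n (a n) r (rule n) G
                  \<and> Ap n (a n) r (rule n) G tt = A0 \<and> Zp n (a n) r (rule n) G tt = Z0}"
      define B where "B = {G. real (card {v \<in> {1..n} - (Zp n (a n) r (rule n) G tt \<union> S n).
                     r - 1 \<le> card {z \<in> Zp n (a n) r (rule n) G tt. adj G v z}})
                  < 3 * real r / (4 * p n)}"
      have CC: "C = Cset tt A0 Z0" unfolding C_def Cset_def ..
      have goal: "measure_pmf.prob (gnp n (p n)) C > 0 \<longrightarrow>
          measure_pmf.prob (gnp n (p n)) (B \<inter> C) / measure_pmf.prob (gnp n (p n)) C \<le> exp (- (1/100) / p n)"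
      proof
        assume PC: "measure_pmf.prob (gnp n (p n)) C > 0"
        show "measure_pmf.prob (gnp n (p n)) (B \<inter> C) / measure_pmf.prob (gnp n (p n)) C \<le> exp (- (1/100) / p n)"
        proof (cases "p n > 0")
          case False
          then have "3 * real r / (4 * p n) \<le> 0" by (simp add: divide_nonneg_nonpos)
          then have "B = {}" unfolding B_def by auto
          then show ?thesis by simp
        next
          case True
          have finS: "finite (S n)" using assms(5) finite_subset by blast
          show ?thesis
            unfolding B_def CC
            by (rule main_bound[OF assms(1) True _ _ finS])
               (use elim True PC CC tt_def in auto)
        qed
      qed
      then show "let P = measure_pmf.prob (gnp n (p n));
          tt = t0 r n (p n);
          C = {G. tt \<le> stop_time n (a n) r (rule n) G
                  \<and> Ap n (a n) r (rule n) G tt = A0 \<and> Zp n (a n) r (rule n) G tt = Z0};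
          B = {G. real (card {v \<in> {1..n} - (Zp n (a n) r (rule n) G tt \<union> S n).
                     r - 1 \<le> card {z \<in> Zp n (a n) r (rule n) G tt. adj G v z}})
                  < 3 * real r / (4 * p n)}
      in P C > 0 \<longrightarrow> P (B \<inter> C) / P C \<le> exp (- (1/100) / p n)"
        unfolding Let_def C_def B_def tt_def .
    qed
  qed
qed

end
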